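(* Let $G$ be a $6$-regular graph, $\mathcal S$ a canonical path partition of $G$, and $P$ a path component with end-vertices $o_1,o_2$. Let $x_1,x_2\in V_2$ be path neighbors on $P$, with $x_1$ immediately preceding $x_2$ when $P$ is traversed from $o_1$ to $o_2$, and suppose $x_1$ goes to $o_1$ and $x_2$ goes to $o_2$. Then no vertex of $P$ lying strictly between $o_1$ and $x_1$, and no vertex of $P$ lying strictly between $x_2$ and $o_2$, is heavy.
   Context: All graphs are finite, simple and undirected. A path partition of $G=(V,E)$ is a set of vertex-disjoint paths (single vertices allowed) covering $V$; its members are components. A component with $t\ge3$ vertices is a cycle component if the subgraph induced on its vertex set has a spanning cycle; a one-vertex component is an isolated vertex; every other component is a path component. A path partition is canonical if (1) it has the minimum number of components among all path partitions of $G$; (2) among those, it has the maximum number of cycle components; (3) it has no isolated vertices. Given a canonical path partition $\mathcal S$ of $G$: two vertices are path neighbors if they are consecutive on a path component. An edge of $G$ is a free edge unless it joins two path neighbors or has both endpoints in the same cycle component. $V_1$ is the set of end-vertices of path components together with all vertices of cycle components. $V_2$ is the set of vertices not in $V_1$ that are joined by a free edge to a vertex of $V_1$. A balanced edge is a free edge with one endpoint in $V_1$ and the other in $V_2$; for $x\in V_2$, $y\in V_1$ we say $x$ goes to $y$ if $xy$ is a balanced edge. A vertex of $V_2$ is heavy if it is incident to at least three balanced edges whose other endpoints are end-vertices of path components. *)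

theory Defs
  imports Main
begin

definition simple_graph :: "'a set \<Rightarrow> ('a \<Rightarrow> 'a \<Rightarrow> bool) \<Rightarrow> bool" where
  "simple_graph V E \<longleftrightarrow> finite V \<and> (\<forall>u v. E u v \<longrightarrow> E v u) \<and> (\<forall>u. \<not> E u u)
     \<and> (\<forall>u v. E u v \<longrightarrow> u \<in> V \<and> v \<in> V)"

definition regular :: "nat \<Rightarrow> 'a set \<Rightarrow> ('a \<Rightarrow> 'a \<Rightarrow> bool) \<Rightarrow> bool" where
  "regular d V E \<longleftrightarrow> (\<forall>v\<in>V. card {u\<in>V. E v u} = d)"

definition gpath :: "('a \<Rightarrow> 'a \<Rightarrow> bool) \<Rightarrow> 'a list \<Rightarrow> bool" where
  "gpath E xs \<longleftrightarrow> xs \<noteq> [] \<and> distinct xs \<and> (\<forall>i. Suc i < length xs \<longrightarrow> E (xs ! i) (xs ! Suc i))"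

text \<open>A path partition: a finite set of vertex-disjoint paths covering V.
  (Each component is stored as one of its two orientations; disjointness forbids storing both.)\<close>
definition path_partition :: "'a set \<Rightarrow> ('a \<Rightarrow> 'a \<Rightarrow> bool) \<Rightarrow> 'a list set \<Rightarrow> bool" where
  "path_partition V E S \<longleftrightarrow> finite S \<and> (\<forall>p\<in>S. gpath E p)
     \<and> (\<forall>p\<in>S. \<forall>q\<in>S. p \<noteq> q \<longrightarrow> set p \<inter> set q = {})
     \<and> \<Union>(set ` S) = V"

definition has_spanning_cycle :: "('a \<Rightarrow> 'a \<Rightarrow> bool) \<Rightarrow> 'a set \<Rightarrow> bool" where
  "has_spanning_cycle E A \<longleftrightarrow> (\<exists>c. distinct c \<and> set c = A \<and> 3 \<le> length c
     \<and> (\<forall>i. Suc i < length c \<longrightarrow> E (c ! i) (c ! Suc i)) \<and> E (last c) (hd c))"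

definition cycle_comp :: "('a \<Rightarrow> 'a \<Rightarrow> bool) \<Rightarrow> 'a list \<Rightarrow> bool" where
  "cycle_comp E p \<longleftrightarrow> 3 \<le> length p \<and> has_spanning_cycle E (set p)"

definition path_comp :: "('a \<Rightarrow> 'a \<Rightarrow> bool) \<Rightarrow> 'a list \<Rightarrow> bool" where
  "path_comp E p \<longleftrightarrow> 2 \<le> length p \<and> \<not> cycle_comp E p"

definition canonical :: "'a set \<Rightarrow> ('a \<Rightarrow> 'a \<Rightarrow> bool) \<Rightarrow> 'a list set \<Rightarrow> bool" where
  "canonical V E S \<longleftrightarrow> path_partition V E S
     \<and> (\<forall>S'. path_partition V E S' \<longrightarrow> card S \<le> card S')
     \<and> (\<forall>S'. path_partition V E S' \<and> card S' = card S \<longrightarrow>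
           card {p\<in>S'. cycle_comp E p} \<le> card {p\<in>S. cycle_comp E p})
     \<and> (\<forall>p\<in>S. 2 \<le> length p)"

definition path_nbrs :: "('a \<Rightarrow> 'a \<Rightarrow> bool) \<Rightarrow> 'a list set \<Rightarrow> 'a \<Rightarrow> 'a \<Rightarrow> bool" where
  "path_nbrs E S u v \<longleftrightarrow> (\<exists>p\<in>S. path_comp E p \<and> (\<exists>i. Suc i < length p \<and>
     ((p ! i = u \<and> p ! Suc i = v) \<or> (p ! i = v \<and> p ! Suc i = u))))"

definition free_edge :: "('a \<Rightarrow> 'a \<Rightarrow> bool) \<Rightarrow> 'a list set \<Rightarrow> 'a \<Rightarrow> 'a \<Rightarrow> bool" where
  "free_edge E S u v \<longleftrightarrow> E u v \<and> \<not> path_nbrs E S u v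
     \<and> \<not> (\<exists>p\<in>S. cycle_comp E p \<and> u \<in> set p \<and> v \<in> set p)"

definition path_ends :: "('a \<Rightarrow> 'a \<Rightarrow> bool) \<Rightarrow> 'a list set \<Rightarrow> 'a set" where
  "path_ends E S = {hd p | p. p \<in> S \<and> path_comp E p} \<union> {last p | p. p \<in> S \<and> path_comp E p}"

definition V1 :: "('a \<Rightarrow> 'a \<Rightarrow> bool) \<Rightarrow> 'a list set \<Rightarrow> 'a set" where
  "V1 E S = path_ends E S \<union> \<Union>{set p | p. p \<in> S \<and> cycle_comp E p}"

definition V2 :: "'a set \<Rightarrow> ('a \<Rightarrow> 'a \<Rightarrow> bool) \<Rightarrow> 'a list set \<Rightarrow> 'a set" where
  "V2 V E S = {x \<in> V. x \<notin> V1 E S \<and> (\<exists>y\<in>V1 E S. free_edge E S x y)}"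

definition goes_to :: "'a set \<Rightarrow> ('a \<Rightarrow> 'a \<Rightarrow> bool) \<Rightarrow> 'a list set \<Rightarrow> 'a \<Rightarrow> 'a \<Rightarrow> bool" where
  "goes_to V E S x y \<longleftrightarrow> x \<in> V2 V E S \<and> y \<in> V1 E S \<and> free_edge E S x y"

definition heavy :: "'a set \<Rightarrow> ('a \<Rightarrow> 'a \<Rightarrow> bool) \<Rightarrow> 'a list set \<Rightarrow> 'a \<Rightarrow> bool" where
  "heavy V E S x \<longleftrightarrow> x \<in> V2 V E S \<and> 3 \<le> card {y. goes_to V E S x y \<and> y \<in> path_ends E S}"

end

theory Submission
  imports Defs
begin


lemma gpath_succ: "gpath E xs \<longleftrightarrow> xs \<noteq> [] \<and> distinct xs \<and> successively E xs"
  unfolding gpath_def successively_conv_nth by blast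

lemma succ_take: "successively E xs \<Longrightarrow> successively E (take k xs)"
  unfolding successively_conv_nth by auto

lemma succ_drop: "successively E xs \<Longrightarrow> successively E (drop k xs)"
  unfolding successively_conv_nth by auto

lemma swap_contra:
  assumes can: "canonical V E S" and PS: "P \<in> S" and RS: "R \<in> S" and PR: "P \<noteq> R"
    and nP: "\<not> cycle_comp E P" and nR: "\<not> cycle_comp E R"
    and gA: "gpath E A" and gB: "gpath E B"
    and un: "set A \<union> set B = set P \<union> set R" and dj: "set A \<inter> set B = {}"
    and cB: "cycle_comp E B"
  shows False
proof -
  have pp: "path_partition V E S" using can unfolding canonical_def by blast
  have fin: "finite S" and gp: "\<forall>p\<in>S. gpath E p"
    and dis: "\<forall>p\<in>S. \<forall>q\<in>S. p \<noteq> q \<longrightarrow> set p \<inter> set q = {}"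
    and cov: "\<Union>(set ` S) = V" using pp unfolding path_partition_def by blast+
  define S0 where "S0 = S - {P, R}"
  define S' where "S' = insert A (insert B S0)"
  have d0: "\<forall>q\<in>S0. set q \<inter> (set P \<union> set R) = {}"
    using dis PS RS unfolding S0_def by blast
  have Ane: "set A \<noteq> {}" and Bne: "set B \<noteq> {}" using gA gB unfolding gpath_def by auto
  have sA: "set A \<subseteq> set P \<union> set R" and sB: "set B \<subseteq> set P \<union> set R" using un by blast+
  have AS0: "A \<notin> S0"
  proof
    assume "A \<in> S0"
    with d0 have i: "set A \<inter> (set P \<union> set R) = {}" by (rule bspec)
    have "set A = {}" using sA i by (simp add: Int_absorb2)
    with Ane show False by (rule notE)
  qed
  have BS0: "B \<notin> S0"
  proof
    assume "B \<in> S0"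
    with d0 have i: "set B \<inter> (set P \<union> set R) = {}" by (rule bspec)
    have "set B = {}" using sB i by (simp add: Int_absorb2)
    with Bne show False by (rule notE)
  qed
  have AB: "A \<noteq> B" using dj Ane by auto
  have pp': "path_partition V E S'"
    unfolding path_partition_def
  proof (intro conjI)
    show "finite S'" using fin unfolding S'_def S0_def by simp
    show "\<forall>p\<in>S'. gpath E p" using gp gA gB unfolding S'_def S0_def by auto
    show "\<forall>p\<in>S'. \<forall>q\<in>S'. p \<noteq> q \<longrightarrow> set p \<inter> set q = {}"
    proof (intro ballI impI)
      fix p q assume p: "p \<in> S'" and q: "q \<in> S'" and pq: "p \<noteq> q"
      have dA: "\<forall>r\<in>S0. set A \<inter> set r = {}" using d0 sA by blast
      have dB: "\<forall>r\<in>S0. set B \<inter> set r = {}" using d0 sB by blast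
      have dS: "\<forall>r\<in>S0. \<forall>t\<in>S0. r \<noteq> t \<longrightarrow> set r \<inter> set t = {}" using dis unfolding S0_def by blast
      show "set p \<inter> set q = {}"
      proof -
        have dA': "\<forall>r\<in>S0. set r \<inter> set A = {}" using dA by blast
        have dB': "\<forall>r\<in>S0. set r \<inter> set B = {}" using dB by blast
        have dj': "set B \<inter> set A = {}" using dj by blast
        from p q pq dA dB dA' dB' dS dj dj' show ?thesis unfolding S'_def by blast
      qed
    qed
    have "\<Union>(set ` S) = set P \<union> set R \<union> \<Union>(set ` S0)" using PS RS unfolding S0_def by blast
    then show "\<Union>(set ` S') = V" using cov un unfolding S'_def by blast
  qed
  have cS0: "card S0 = card S - 2" unfolding S0_def using PS RS PR fin
    by (simp add: card_Diff_subset)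
  have cS: "card S \<ge> 2" using PS RS PR fin
    by (metis card_2_iff card_mono empty_subsetI insert_subset)
  have f0: "finite S0" using fin unfolding S0_def by simp
  have cS': "card S' = card S" unfolding S'_def using AS0 BS0 AB f0 cS0 cS by simp
  define C where "C = {p\<in>S. cycle_comp E p}"
  define C' where "C' = {p\<in>S'. cycle_comp E p}"
  have le: "card C' \<le> card C"
    using can pp' cS' unfolding canonical_def C_def C'_def by blast
  have sub: "insert B C \<subseteq> C'"
    using nP nR cB unfolding S'_def S0_def C_def C'_def by auto
  have BC: "B \<notin> C" using BS0 nP nR unfolding S0_def C_def by auto
  have fS': "finite S'" using f0 unfolding S'_def by simp
  have fC': "finite C'" using fS' unfolding C'_def by simp
  have fC: "finite C" using fin unfolding C_def by simp
  have "card (insert B C) \<le> card C'" using card_mono[OF fC' sub] .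
  moreover have "card (insert B C) = Suc (card C)" using card_insert_disjoint[OF fC BC] .
  ultimately show False using le by simp
qed


lemma gpath_rev: "(\<forall>u v. E u v \<longrightarrow> E v u) \<Longrightarrow> gpath E xs \<Longrightarrow> gpath E (rev xs)"
  unfolding gpath_succ by (auto intro: successively_mono)

lemma nbrs_Q:
  assumes PS: "P \<in> S" and pc: "path_comp E P" and Q: "Q = P \<or> Q = rev P" and k: "Suc k < length Q"
  shows "path_nbrs E S (Q ! k) (Q ! Suc k)"
  using Q
proof
  assume "Q = P" then show ?thesis using PS pc k unfolding path_nbrs_def by blast
next
  assume Qr: "Q = rev P"
  define m where "m = length P - Suc (Suc k)"
  have lP: "length P = length Q" using Qr by simp
  have m1: "Suc m < length P" using k lP unfolding m_def by simp
  have "P ! m = Q ! Suc k" using Qr k unfolding m_def by (simp add: rev_nth)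
  moreover have "P ! Suc m = Q ! k" using Qr k unfolding m_def
    by (simp add: rev_nth Suc_diff_Suc)
  ultimately show ?thesis using PS pc m1 unfolding path_nbrs_def by blast
qed

lemma half:
  assumes sg: "simple_graph V E" and can: "canonical V E S"
    and PS: "P \<in> S" and pc: "path_comp E P"
    and Q: "Q = P \<or> Q = rev P"
    and len: "Suc i < length Q"
    and x2: "Q ! Suc i \<in> V2 V E S"
    and g1: "goes_to V E S (Q ! i) (hd Q)" and g2: "goes_to V E S (Q ! Suc i) (last Q)"
    and j: "0 < j" "j < i" and hv: "heavy V E S (Q ! j)"
  shows False
proof -
  have sym: "\<forall>u v. E u v \<longrightarrow> E v u" using sg unfolding simple_graph_def by blast
  have pp: "path_partition V E S" using can unfolding canonical_def by blast
  have gp: "\<forall>p\<in>S. gpath E p"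
    and dis: "\<forall>p\<in>S. \<forall>q\<in>S. p \<noteq> q \<longrightarrow> set p \<inter> set q = {}"
    using pp unfolding path_partition_def by blast+
  have gP: "gpath E P" using gp PS by blast
  have gQ: "gpath E Q" using Q gP gpath_rev[OF sym] by blast
  have sQ: "set Q = set P" using Q by auto
  have Pne: "P \<noteq> []" using gP unfolding gpath_def by blast
  have hlQ: "{hd Q, last Q} = {hd P, last P}" using Q Pne by (auto simp: hd_rev last_rev)
  have PE: "{hd P, last P} \<subseteq> path_ends E S" using PS pc unfolding path_ends_def by blast
  have dQ: "distinct Q" and scQ: "successively E Q" using gQ unfolding gpath_succ by blast+
  have lastQ: "last Q = Q ! (length Q - 1)" using gQ unfolding gpath_def by (simp add: last_conv_nth)
  have "Q ! Suc i \<notin> V1 E S" using x2 unfolding V2_def by blast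
  moreover have "last Q \<in> V1 E S" using hlQ PE unfolding V1_def by blast
  ultimately have ne1: "Q ! Suc i \<noteq> last Q" by metis
  have l2: "Suc (Suc i) < length Q" using ne1 len lastQ
    by (metis Suc_lessI diff_Suc_1)
  have fe2: "free_edge E S (Q ! Suc i) (last Q)" using g2 unfolding goes_to_def by blast
  have l3: "Suc (Suc (Suc i)) < length Q"
  proof (rule ccontr)
    assume "\<not> ?thesis"
    then have eq: "length Q - 1 = Suc (Suc i)" using l2 by simp
    have "path_nbrs E S (Q ! Suc i) (Q ! Suc (Suc i))" using nbrs_Q[OF PS pc Q l2] .
    then show False using fe2 lastQ eq unfolding free_edge_def by simp
  qed
  define T where "T = {y. goes_to V E S (Q ! j) y \<and> y \<in> path_ends E S}"
  have cT: "3 \<le> card T" using hv unfolding heavy_def T_def by blast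
  have "\<exists>e\<in>T. e \<notin> {hd Q, last Q}"
  proof (rule ccontr)
    assume "\<not> ?thesis"
    then have "T \<subseteq> {hd Q, last Q}" by blast
    then have "card T \<le> card {hd Q, last Q}" by (simp add: card_mono)
    also have "\<dots> \<le> 2" by (simp add: card_insert_le_m1)
    finally show False using cT by simp
  qed
  then obtain e where eT: "e \<in> T" and enQ: "e \<notin> {hd Q, last Q}" by blast
  have fe: "free_edge E S (Q ! j) e" and eE: "e \<in> path_ends E S" using eT unfolding T_def goes_to_def by blast+
  have Eje: "E (Q ! j) e" using fe unfolding free_edge_def by blast
  obtain R where RS: "R \<in> S" and pcR: "path_comp E R" and eR: "e = hd R \<or> e = last R"
    using eE unfolding path_ends_def by blast
  have PR: "P \<noteq> R" using eR enQ hlQ by auto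
  have gR: "gpath E R" using gp RS by blast
  have dPR: "set P \<inter> set R = {}" using dis PS RS PR by blast
  define R' where "R' = (if e = hd R then R else rev R)"
  have gR': "gpath E R'" using gR gpath_rev[OF sym] unfolding R'_def by simp
  have sR': "set R' = set R" unfolding R'_def by simp
  have Rne: "R \<noteq> []" using gR unfolding gpath_def by blast
  have hR': "hd R' = e" using eR Rne unfolding R'_def by (auto simp: hd_rev)
  have R'ne: "R' \<noteq> []" using gR' unfolding gpath_def by blast
  define C where "C = take (Suc i) Q"
  define X where "X = drop (Suc j) C"
  define Y where "Y = take (Suc j) C"
  define A where "A = X @ Y @ R'"
  define B where "B = drop (Suc i) Q"
  have lC: "length C = Suc i" using len unfolding C_def by simp
  have Xne: "X \<noteq> []" using lC j unfolding X_def by simp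
  have Cne: "C \<noteq> []" using lC by (cases C) auto
  have Yne: "Y \<noteq> []" using Cne unfolding Y_def by simp
  have lastX: "last X = Q ! i" using lC j len unfolding X_def C_def
    by (simp add: last_conv_nth)
  have hdY: "hd Y = hd Q" using len unfolding Y_def C_def by (cases Q) auto
  have lastY: "last Y = Q ! j" using j len unfolding Y_def C_def
    by (subst last_conv_nth) auto
  have fe1: "free_edge E S (Q ! i) (hd Q)" using g1 unfolding goes_to_def by blast
  have E1: "E (Q ! i) (hd Q)" using fe1 unfolding free_edge_def by blast
  have dC: "distinct C" using dQ unfolding C_def by simp
  have scC: "successively E C" using scQ unfolding C_def by (rule succ_take)
  have dYX: "distinct (Y @ X)" using dC unfolding X_def Y_def by simp
  have XY: "set X \<inter> set Y = {}" and dX: "distinct X" and dY: "distinct Y"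
    using dYX by (auto simp only: distinct_append Int_commute)
  have sYX: "set (Y @ X) = set C" unfolding X_def Y_def by simp
  have sXY: "set X \<union> set Y = set C" using sYX by auto
  have sCB0: "set (C @ B) = set Q" unfolding C_def B_def by simp
  have sCB: "set C \<union> set B = set Q" using sCB0 by simp
  have dCB0: "distinct (C @ B)" using dQ unfolding C_def B_def by simp
  have dCB: "set C \<inter> set B = {}" using dCB0 by (simp only: distinct_append)
  have CP: "set C \<subseteq> set P" using sCB sQ by blast
  have BP: "set B \<subseteq> set P" using sCB sQ by blast
  have gA: "gpath E A"
    unfolding gpath_succ A_def
  proof (intro conjI)
    show "X @ Y @ R' \<noteq> []" using Xne by simp
    show "distinct (X @ Y @ R')" using dX dY XY gR' sR' dPR CP sXY unfolding gpath_def by auto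
    have "successively E X" using scC unfolding X_def by (rule succ_drop)
    moreover have "successively E Y" using scC unfolding Y_def by (rule succ_take)
    moreover have "successively E R'" using gR' unfolding gpath_succ by blast
    ultimately show "successively E (X @ Y @ R')"
      using Xne Yne R'ne lastX hdY lastY hR' E1 Eje
      by (simp add: successively_append_iff)
  qed
  have gB: "gpath E B" using l3 dQ scQ unfolding gpath_succ B_def by (auto intro: succ_drop)
  have lastB: "last B = last Q" using l3 unfolding B_def by simp
  have hdB: "hd B = Q ! Suc i" using l3 unfolding B_def by (simp add: hd_drop_conv_nth)
  have E2: "E (last Q) (Q ! Suc i)" using fe2 sym unfolding free_edge_def by blast
  have cB: "cycle_comp E B"
    unfolding cycle_comp_def has_spanning_cycle_def
  proof (intro conjI exI)
    show "3 \<le> length B" using l3 unfolding B_def by simp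
    then show "3 \<le> length B" .
    show "distinct B" using gB unfolding gpath_def by blast
    show "set B = set B" ..
    show "\<forall>k. Suc k < length B \<longrightarrow> E (B ! k) (B ! Suc k)" using gB unfolding gpath_def by blast
    show "E (last B) (hd B)" using lastB hdB E2 by simp
  qed
  have sA: "set A = set C \<union> set R" unfolding A_def using sXY sR' by auto
  have un: "set A \<union> set B = set P \<union> set R" using sA sCB sQ by blast
  have dj: "set A \<inter> set B = {}" using sA dCB BP dPR by blast
  have nP: "\<not> cycle_comp E P" using pc unfolding path_comp_def by blast
  have nR: "\<not> cycle_comp E R" using pcR unfolding path_comp_def by blast
  show False using swap_contra[OF can PS RS PR nP nR gA gB un dj cB] .
qed

theorem mainTheorem12:
  fixes V :: "'a set" and E :: "'a \<Rightarrow> 'a \<Rightarrow> bool" and S :: "'a list set"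
    and P Q :: "'a list" and i :: nat
  assumes "simple_graph V E" and "regular 6 V E" and "canonical V E S"
    and "P \<in> S" and "path_comp E P"
    and "Q = P \<or> Q = rev P"
    and "Suc i < length Q"
    and "Q ! i \<in> V2 V E S" and "Q ! Suc i \<in> V2 V E S"
    and "goes_to V E S (Q ! i) (hd Q)" and "goes_to V E S (Q ! Suc i) (last Q)"
  shows "(\<forall>j. 0 < j \<and> j < i \<longrightarrow> \<not> heavy V E S (Q ! j))
       \<and> (\<forall>j. Suc i < j \<and> j < length Q - 1 \<longrightarrow> \<not> heavy V E S (Q ! j))"
proof (intro conjI allI impI notI)
  fix j assume "0 < j \<and> j < i" and "heavy V E S (Q ! j)"
  then show False using half[OF assms(1,3,4,5,6,7,9,10,11)] by blast
next
  fix j assume jj: "Suc i < j \<and> j < length Q - 1" and hv: "heavy V E S (Q ! j)"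
  define n where "n = length Q"
  define Q' where "Q' = rev Q"
  define i' where "i' = n - Suc (Suc i)"
  define j' where "j' = n - Suc j"
  have Q': "Q' = P \<or> Q' = rev P" using assms(6) unfolding Q'_def by auto
  have l': "Suc i' < length Q'" using assms(7) unfolding Q'_def i'_def n_def by simp
  have e1: "Q' ! Suc i' = Q ! i" using assms(7) unfolding Q'_def i'_def n_def
    by (simp add: rev_nth Suc_diff_Suc)
  have e2: "Q' ! i' = Q ! Suc i" using assms(7) unfolding Q'_def i'_def n_def
    by (simp add: rev_nth)
  have Qne: "Q \<noteq> []" using assms(7) by auto
  have h1: "hd Q' = last Q" unfolding Q'_def by (simp add: hd_rev)
  have h2: "last Q' = hd Q" unfolding Q'_def by (simp add: last_rev)
  have jl: "j < length Q" using jj by arith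
  have e3: "Q' ! j' = Q ! j" using jl unfolding Q'_def j'_def n_def
    by (simp add: rev_nth)
  have j': "0 < j'" "j' < i'" using jj assms(7) unfolding j'_def i'_def n_def by auto
  have a8: "Q' ! Suc i' \<in> V2 V E S" unfolding e1 by (rule assms(8))
  have a10: "goes_to V E S (Q' ! i') (hd Q')" unfolding e2 h1 by (rule assms(11))
  have a11: "goes_to V E S (Q' ! Suc i') (last Q')" unfolding e1 h2 by (rule assms(10))
  have hv': "heavy V E S (Q' ! j')" unfolding e3 by (rule hv)
  show False using half[OF assms(1,3,4,5) Q' l' a8 a10 a11 j' hv'] .
qed

end
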